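(* Let $P\in\mathbb C[x_1,\dots,x_4,y_1,\dots,y_6]$ not depend on $y_3$, write $P=\sum_{i\ge0}y_1^iP_i$ with each $P_i$ independent of $y_1$, and suppose $\mathbf DP=\mathbf D_1P=\mathbf D_2P=\mathbf D_3P=\mathbf D_4P=0$, where $\mathbf D=\partial_{y_4}\partial_{y_3}-\partial_{y_5}\partial_{y_2}+\partial_{y_6}\partial_{y_1}$, $\mathbf D_1=\partial_{y_6}\partial_{x_4}-\partial_{y_2}\partial_{x_3}+\partial_{y_3}\partial_{x_2}$, $\mathbf D_2=\partial_{y_5}\partial_{x_4}-\partial_{y_1}\partial_{x_3}+\partial_{y_3}\partial_{x_1}$, $\mathbf D_3=\partial_{y_4}\partial_{x_4}-\partial_{y_1}\partial_{x_2}+\partial_{y_2}\partial_{x_1}$, $\mathbf D_4=\partial_{y_4}\partial_{x_3}-\partial_{y_5}\partial_{x_2}+\partial_{y_6}\partial_{x_1}$. Then there exists $K\in\mathbb C[x_1,\dots,x_4,y_1,\dots,y_6]$ depending neither on $y_1$ nor on $y_3$ such that $\mathbf DK=-\partial_{y_6}P_0$, $\mathbf D_1K=0$, $\mathbf D_2K=\partial_{x_3}P_0$, $\mathbf D_3K=\partial_{x_2}P_0$ and $\mathbf D_4K=0$. *)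

theory Defs
  imports Complex_Main "HOL-Library.Poly_Mapping"
begin

datatype var = X1 | X2 | X3 | X4 | Y1 | Y2 | Y3 | Y4 | Y5 | Y6

type_synonym mpoly = "(var \<Rightarrow> nat) \<Rightarrow>\<^sub>0 complex"

definition indep :: "var \<Rightarrow> mpoly \<Rightarrow> bool" where
  "indep v P \<longleftrightarrow> (\<forall>m \<in> Poly_Mapping.keys P. m v = 0)"

definition pd :: "var \<Rightarrow> mpoly \<Rightarrow> mpoly" where
  "pd v P = (\<Sum>m\<in>Poly_Mapping.keys P. Poly_Mapping.single (m(v := m v - 1)) (of_nat (m v) * Poly_Mapping.lookup P m))"

definition y1coeff :: "nat \<Rightarrow> mpoly \<Rightarrow> mpoly" where
  "y1coeff i P = (\<Sum>m\<in>{m \<in> Poly_Mapping.keys P. m Y1 = i}. Poly_Mapping.single (m(Y1 := 0)) (Poly_Mapping.lookup P m))"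

definition DD :: "mpoly \<Rightarrow> mpoly" where
  "DD P = pd Y4 (pd Y3 P) - pd Y5 (pd Y2 P) + pd Y6 (pd Y1 P)"
definition DD1 :: "mpoly \<Rightarrow> mpoly" where
  "DD1 P = pd Y6 (pd X4 P) - pd Y2 (pd X3 P) + pd Y3 (pd X2 P)"
definition DD2 :: "mpoly \<Rightarrow> mpoly" where
  "DD2 P = pd Y5 (pd X4 P) - pd Y1 (pd X3 P) + pd Y3 (pd X1 P)"
definition DD3 :: "mpoly \<Rightarrow> mpoly" where
  "DD3 P = pd Y4 (pd X4 P) - pd Y1 (pd X2 P) + pd Y2 (pd X1 P)"
definition DD4 :: "mpoly \<Rightarrow> mpoly" where
  "DD4 P = pd Y4 (pd X3 P) - pd Y5 (pd X2 P) + pd Y6 (pd X1 P)"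

end

theory Submission
  imports Defs
begin

definition inc :: "var \<Rightarrow> (var \<Rightarrow> nat) \<Rightarrow> (var \<Rightarrow> nat)" where
  "inc v u = u(v := Suc (u v))"

lemma pd_lookup:
  "Poly_Mapping.lookup (pd v P) u = of_nat (Suc (u v)) * Poly_Mapping.lookup P (inc v u)"
proof -
  let ?m0 = "inc v u"
  have "Poly_Mapping.lookup (pd v P) u =
     (\<Sum>m\<in>Poly_Mapping.keys P. Poly_Mapping.lookup (Poly_Mapping.single (m(v := m v - 1)) (of_nat (m v) * Poly_Mapping.lookup P m)) u)"
    unfolding pd_def by (simp add: lookup_sum)
  also have "\<dots> = (\<Sum>m\<in>Poly_Mapping.keys P. if m = ?m0 then of_nat (Suc (u v)) * Poly_Mapping.lookup P ?m0 else 0)"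
  proof (rule sum.cong[OF refl])
    fix m assume "m \<in> Poly_Mapping.keys P"
    show "Poly_Mapping.lookup (Poly_Mapping.single (m(v := m v - 1)) (of_nat (m v) * Poly_Mapping.lookup P m)) u
        = (if m = ?m0 then of_nat (Suc (u v)) * Poly_Mapping.lookup P ?m0 else 0)"
    proof (cases "m(v := m v - 1) = u")
      case True
      show ?thesis
      proof (cases "m v = 0")
        case True
        with \<open>m(v := m v - 1) = u\<close> have "m = u" by (metis fun_upd_idem diff_0_eq_0)
        hence "m \<noteq> ?m0" unfolding inc_def by (metis fun_upd_same n_not_Suc_n)
        with True show ?thesis by (simp add: lookup_single when_def)
      next
        case False
        with \<open>m(v := m v - 1) = u\<close> have "m = ?m0" unfolding inc_def
          by (auto simp: fun_eq_iff split: if_splits)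
        thus ?thesis using \<open>m(v := m v - 1) = u\<close> by (simp add: lookup_single when_def inc_def)
      qed
    next
      case False
      hence "m \<noteq> ?m0" unfolding inc_def by auto
      with False show ?thesis by (simp add: lookup_single when_def)
    qed
  qed
  also have "\<dots> = of_nat (Suc (u v)) * Poly_Mapping.lookup P ?m0"
    by (simp add: sum.delta in_keys_iff)
  finally show ?thesis .
qed

lemma var_fun_eq: "f = g \<longleftrightarrow> (f X1 = g X1 \<and> f X2 = g X2 \<and> f X3 = g X3 \<and> f X4 = g X4 \<and> f Y1 = g Y1
   \<and> f Y2 = g Y2 \<and> f Y3 = g Y3 \<and> f Y4 = g Y4 \<and> f Y5 = g Y5 \<and> f Y6 = g Y6)"
proof
  assume h: "f X1 = g X1 \<and> f X2 = g X2 \<and> f X3 = g X3 \<and> f X4 = g X4 \<and> f Y1 = g Y1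
   \<and> f Y2 = g Y2 \<and> f Y3 = g Y3 \<and> f Y4 = g Y4 \<and> f Y5 = g Y5 \<and> f Y6 = g Y6"
  show "f = g"
  proof
    fix x show "f x = g x" using h by (cases x) auto
  qed
qed simp

lemma UNIV_var: "(UNIV :: var set) = {X1, X2, X3, X4, Y1, Y2, Y3, Y4, Y5, Y6}"
proof -
  have "x \<in> {X1, X2, X3, X4, Y1, Y2, Y3, Y4, Y5, Y6}" for x :: var by (cases x) auto
  thus ?thesis by auto
qed

lemma finite_UNIV_var: "finite (UNIV :: var set)"
  by (simp add: UNIV_var)

lemma finite_bounded_mons: "finite {u :: var \<Rightarrow> nat. \<forall>v. u v \<le> n}"
proof -
  have "finite {f :: var \<Rightarrow> nat. \<forall>x. (x \<in> UNIV \<longrightarrow> f x \<in> {..n}) \<and> (x \<notin> UNIV \<longrightarrow> f x = 0)}"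
    by (rule finite_set_of_finite_funs) (simp_all add: finite_UNIV_var)
  moreover have "{f :: var \<Rightarrow> nat. \<forall>x. (x \<in> UNIV \<longrightarrow> f x \<in> {..n}) \<and> (x \<notin> UNIV \<longrightarrow> f x = 0)}
      = {u. \<forall>v. u v \<le> n}" by auto
  ultimately show ?thesis by simp
qed

definition mfact :: "(var \<Rightarrow> nat) \<Rightarrow> complex" where
  "mfact u = of_nat (fact (u X1) * fact (u X2) * fact (u X3) * fact (u X4) * fact (u Y1)
     * fact (u Y2) * fact (u Y3) * fact (u Y4) * fact (u Y5) * fact (u Y6))"

lemma mfact_nz: "mfact u \<noteq> 0"
  unfolding mfact_def by (simp del: of_nat_mult)

lemma mfact_inc: "mfact (inc v u) = of_nat (Suc (u v)) * mfact u"
  by (cases v) (simp_all add: mfact_def inc_def of_nat_mult algebra_simps)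

definition LL :: "mpoly \<Rightarrow> (var \<Rightarrow> nat) \<Rightarrow> complex" where
  "LL G u = mfact u * Poly_Mapping.lookup G u"

lemma LL_pd: "LL (pd v G) u = LL G (inc v u)"
  by (simp add: LL_def pd_lookup mfact_inc mult_ac)

lemma LL_add: "LL (G + H) u = LL G u + LL H u"
  by (simp add: LL_def lookup_add algebra_simps)

lemma LL_diff: "LL (G - H) u = LL G u - LL H u"
  by (simp add: LL_def lookup_minus algebra_simps)

lemma LL_uminus: "LL (- G) u = - LL G u"
  by (simp add: LL_def)

lemma LL_zero: "LL 0 u = 0"
  by (simp add: LL_def)

lemma LL_eqI: "(\<And>u. LL G u = LL H u) \<Longrightarrow> G = H"
  by (rule poly_mapping_eqI) (simp add: LL_def mfact_nz)

lemma LL_indep: "indep v G \<Longrightarrow> u v \<noteq> 0 \<Longrightarrow> LL G u = 0"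
  unfolding indep_def LL_def by (metis in_keys_iff mult_zero_right)

lemma LL_y1coeff0: "LL (y1coeff 0 G) u = (if u Y1 = 0 then LL G u else 0)"
proof -
  let ?S = "{m \<in> Poly_Mapping.keys G. m Y1 = 0}"
  have fin: "finite ?S" by simp
  have "Poly_Mapping.lookup (y1coeff 0 G) u =
      (\<Sum>m\<in>?S. Poly_Mapping.lookup (Poly_Mapping.single (m(Y1 := 0)) (Poly_Mapping.lookup G m)) u)"
    unfolding y1coeff_def by (simp add: lookup_sum)
  also have "\<dots> = (\<Sum>m\<in>?S. if m = u then Poly_Mapping.lookup G u else 0)"
    by (rule sum.cong[OF refl]) (auto simp: lookup_single when_def fun_upd_idem)
  also have "\<dots> = (if u \<in> ?S then Poly_Mapping.lookup G u else 0)"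
    using fin by (simp add: sum.delta')
  also have "\<dots> = (if u Y1 = 0 then Poly_Mapping.lookup G u else 0)"
    by (auto simp: in_keys_iff)
  finally show ?thesis by (simp add: LL_def)
qed

definition mv :: "var \<Rightarrow> var \<Rightarrow> var \<Rightarrow> var \<Rightarrow> (var \<Rightarrow> nat) \<Rightarrow> var \<Rightarrow> nat" where
  "mv a b c d U = U(a := U a - 1, b := U b - 1, c := Suc (U c), d := Suc (U d))"

abbreviation "t1 \<equiv> mv Y2 Y5 Y6 Y1"
abbreviation "t2 \<equiv> mv Y6 X4 X3 Y2"
abbreviation "t3 \<equiv> mv X4 Y5 X3 Y1"
abbreviation "t4a \<equiv> mv Y4 X4 X2 Y1"
abbreviation "t4b \<equiv> mv Y4 X4 X1 Y2"
abbreviation "t5a \<equiv> mv Y6 X1 X2 Y5"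
abbreviation "t5b \<equiv> mv Y6 X1 X3 Y4"

definition wt :: "(var \<Rightarrow> nat) \<Rightarrow> nat" where
  "wt U = U X1 + 3 * U X4 + U Y2"

definition rules :: "((var \<Rightarrow> nat) \<Rightarrow> complex) \<Rightarrow> (var \<Rightarrow> nat) \<Rightarrow> bool" where
  "rules L U \<longleftrightarrow>
     (0 < U Y2 \<and> 0 < U Y5 \<longrightarrow> L U = L (t1 U)) \<and>
     (0 < U Y6 \<and> 0 < U X4 \<longrightarrow> L U = L (t2 U)) \<and>
     (0 < U X4 \<and> 0 < U Y5 \<longrightarrow> L U = L (t3 U)) \<and>
     (0 < U Y4 \<and> 0 < U X4 \<longrightarrow> L U = L (t4a U) - L (t4b U)) \<and>
     (0 < U Y6 \<and> 0 < U X1 \<longrightarrow> L U = L (t5a U) - L (t5b U))"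

lemma rules_1: "rules L U \<Longrightarrow> 0 < U Y2 \<Longrightarrow> 0 < U Y5 \<Longrightarrow> L U = L (t1 U)"
  by (simp add: rules_def)
lemma rules_2: "rules L U \<Longrightarrow> 0 < U Y6 \<Longrightarrow> 0 < U X4 \<Longrightarrow> L U = L (t2 U)"
  by (simp add: rules_def)
lemma rules_3: "rules L U \<Longrightarrow> 0 < U X4 \<Longrightarrow> 0 < U Y5 \<Longrightarrow> L U = L (t3 U)"
  by (simp add: rules_def)
lemma rules_4: "rules L U \<Longrightarrow> 0 < U Y4 \<Longrightarrow> 0 < U X4 \<Longrightarrow> L U = L (t4a U) - L (t4b U)"
  by (simp add: rules_def)
lemma rules_5: "rules L U \<Longrightarrow> 0 < U Y6 \<Longrightarrow> 0 < U X1 \<Longrightarrow> L U = L (t5a U) - L (t5b U)"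
  by (simp add: rules_def)

function Lf :: "((var \<Rightarrow> nat) \<Rightarrow> complex) \<Rightarrow> (var \<Rightarrow> nat) \<Rightarrow> complex" where
  "Lf LP U = (if 0 < U Y2 \<and> 0 < U Y5 then Lf LP (t1 U)
     else if 0 < U Y6 \<and> 0 < U X4 then Lf LP (t2 U)
     else if 0 < U X4 \<and> 0 < U Y5 then Lf LP (t3 U)
     else if 0 < U Y4 \<and> 0 < U X4 then Lf LP (t4a U) - Lf LP (t4b U)
     else if 0 < U Y6 \<and> 0 < U X1 then Lf LP (t5a U) - Lf LP (t5b U)
     else if 0 < U Y1 then LP (U(Y1 := U Y1 - 1)) else 0)"
  by pat_completeness auto
termination by (relation "measure (\<lambda>(LP, U). wt U)") (auto simp: wt_def mv_def)

declare Lf.simps[simp del]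

lemma Lf_rules: "rules (Lf LP) U"
proof (induction "wt U" arbitrary: U rule: less_induct)
  case less
  have IH: "\<And>V. wt V < wt U \<Longrightarrow> rules (Lf LP) V" using less by blast
  note eqU = Lf.simps[of LP U]
  let ?L = "Lf LP"
  show ?case unfolding rules_def
  proof (intro conjI impI)
    assume c: "0 < U Y2 \<and> 0 < U Y5"
    show "?L U = ?L (t1 U)" by (simp only: eqU if_P[OF c])
  next
    assume c: "0 < U Y6 \<and> 0 < U X4"
    show "?L U = ?L (t2 U)"
    proof (cases "0 < U Y2 \<and> 0 < U Y5")
      case True
      have "?L U = ?L (t1 U)" by (simp only: eqU if_P[OF True])
      also have "\<dots> = ?L (t2 (t1 U))"
        by (rule rules_2[OF IH]) (use c True in \<open>auto simp add: wt_def mv_def\<close>)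
      also have "t2 (t1 U) = t1 (t2 U)" using c True by (simp add: var_fun_eq mv_def)
      also have "?L (t1 (t2 U)) = ?L (t2 U)"
        by (rule rules_1[OF IH, symmetric]) (use c True in \<open>auto simp add: wt_def mv_def\<close>)
      finally show ?thesis .
    next
      case False
      show ?thesis by (simp only: eqU if_not_P[OF False] if_P[OF c])
    qed
  next
    assume c: "0 < U X4 \<and> 0 < U Y5"
    show "?L U = ?L (t3 U)"
    proof (cases "0 < U Y2 \<and> 0 < U Y5")
      case True
      have "?L U = ?L (t1 U)" by (simp only: eqU if_P[OF True])
      also have "\<dots> = ?L (t2 (t1 U))"
        by (rule rules_2[OF IH]) (use c True in \<open>auto simp add: wt_def mv_def\<close>)
      also have "t2 (t1 U) = t3 U" using c True by (simp add: var_fun_eq mv_def)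
      finally show ?thesis .
    next
      case F1: False
      show ?thesis
      proof (cases "0 < U Y6 \<and> 0 < U X4")
        case True
        have "?L U = ?L (t2 U)" by (simp only: eqU if_P[OF True] if_not_P[OF F1])
        also have "\<dots> = ?L (t1 (t2 U))"
          by (rule rules_1[OF IH]) (use c True in \<open>auto simp add: wt_def mv_def\<close>)
        also have "t1 (t2 U) = t3 U" using c True by (simp add: var_fun_eq mv_def)
        finally show ?thesis .
      next
        case False
        show ?thesis by (simp only: eqU if_not_P[OF False] if_P[OF c] if_not_P[OF F1])
      qed
    qed
  next
    assume c: "0 < U Y4 \<and> 0 < U X4"
    show "?L U = ?L (t4a U) - ?L (t4b U)"
    proof (cases "0 < U Y2 \<and> 0 < U Y5")
      case True
      have "?L U = ?L (t1 U)" by (simp only: eqU if_P[OF True])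
      also have "\<dots> = ?L (t4a (t1 U)) - ?L (t4b (t1 U))"
        by (rule rules_4[OF IH]) (use c True in \<open>auto simp add: wt_def mv_def\<close>)
      also have "t4a (t1 U) = t1 (t4a U)" using c True by (simp add: var_fun_eq mv_def)
      also have "t4b (t1 U) = t1 (t4b U)" using c True by (simp add: var_fun_eq mv_def)
      also have "?L (t1 (t4a U)) = ?L (t4a U)"
        by (rule rules_1[OF IH, symmetric]) (use c True in \<open>auto simp add: wt_def mv_def\<close>)
      also have "?L (t1 (t4b U)) = ?L (t4b U)"
        by (rule rules_1[OF IH, symmetric]) (use c True in \<open>auto simp add: wt_def mv_def\<close>)
      finally show ?thesis .
    next
      case F1: False
      show ?thesis
      proof (cases "0 < U Y6 \<and> 0 < U X4")
        case True
        have e1: "?L (t4b U) = ?L (t5a (t4b U)) - ?L (t5b (t4b U))"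
          by (rule rules_5[OF IH]) (use c True in \<open>auto simp add: wt_def mv_def\<close>)
        have e2: "t5b (t4b U) = t2 U" using c True by (simp add: var_fun_eq mv_def)
        have e3: "?L (t5a (t4b U)) = ?L (t1 (t5a (t4b U)))"
          by (rule rules_1[OF IH]) (use c True in \<open>auto simp add: wt_def mv_def\<close>)
        have e4: "t1 (t5a (t4b U)) = t4a U" using c True by (simp add: var_fun_eq mv_def)
        have "?L U = ?L (t2 U)" by (simp only: eqU if_P[OF True] if_not_P[OF F1])
        then show ?thesis using e1 e2 e3 e4 by simp
      next
        case F2: False
        show ?thesis
        proof (cases "0 < U X4 \<and> 0 < U Y5")
          case True
          have e1: "?L (t4b U) = ?L (t1 (t4b U))"
            by (rule rules_1[OF IH]) (use c True in \<open>auto simp add: wt_def mv_def\<close>)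
          have e2: "?L (t1 (t4b U)) = ?L (t5a (t1 (t4b U))) - ?L (t5b (t1 (t4b U)))"
            by (rule rules_5[OF IH]) (use c True in \<open>auto simp add: wt_def mv_def\<close>)
          have e3: "t5a (t1 (t4b U)) = t4a U" using c True by (simp add: var_fun_eq mv_def)
          have e4: "t5b (t1 (t4b U)) = t3 U" using c True by (simp add: var_fun_eq mv_def)
          have "?L U = ?L (t3 U)" by (simp only: eqU if_P[OF True] if_not_P[OF F1] if_not_P[OF F2])
          then show ?thesis using e1 e2 e3 e4 by simp
        next
          case False
          show ?thesis by (simp only: eqU if_not_P[OF False] if_P[OF c] if_not_P[OF F1] if_not_P[OF F2])
        qed
      qed
    qed
  next
    assume c: "0 < U Y6 \<and> 0 < U X1"
    show "?L U = ?L (t5a U) - ?L (t5b U)"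
    proof (cases "0 < U Y2 \<and> 0 < U Y5")
      case True
      have "?L U = ?L (t1 U)" by (simp only: eqU if_P[OF True])
      also have "\<dots> = ?L (t5a (t1 U)) - ?L (t5b (t1 U))"
        by (rule rules_5[OF IH]) (use c True in \<open>auto simp add: wt_def mv_def\<close>)
      also have "t5a (t1 U) = t1 (t5a U)" using c True by (simp add: var_fun_eq mv_def)
      also have "t5b (t1 U) = t1 (t5b U)" using c True by (simp add: var_fun_eq mv_def)
      also have "?L (t1 (t5a U)) = ?L (t5a U)"
        by (rule rules_1[OF IH, symmetric]) (use c True in \<open>auto simp add: wt_def mv_def\<close>)
      also have "?L (t1 (t5b U)) = ?L (t5b U)"
        by (rule rules_1[OF IH, symmetric]) (use c True in \<open>auto simp add: wt_def mv_def\<close>)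
      finally show ?thesis .
    next
      case F1: False
      show ?thesis
      proof (cases "0 < U Y6 \<and> 0 < U X4")
        case True
        have e1: "?L (t5a U) = ?L (t3 (t5a U))"
          by (rule rules_3[OF IH]) (use c True in \<open>auto simp add: wt_def mv_def\<close>)
        have e2: "?L (t5b U) = ?L (t4a (t5b U)) - ?L (t4b (t5b U))"
          by (rule rules_4[OF IH]) (use c True in \<open>auto simp add: wt_def mv_def\<close>)
        have e3: "t4a (t5b U) = t3 (t5a U)" using c True by (simp add: var_fun_eq mv_def)
        have e4: "t4b (t5b U) = t2 U" using c True by (simp add: var_fun_eq mv_def)
        have "?L U = ?L (t2 U)" by (simp only: eqU if_P[OF True] if_not_P[OF F1])
        then show ?thesis using e1 e2 e3 e4 by simp
      next
        case F2: False
        show ?thesis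
        proof (cases "0 < U X4 \<and> 0 < U Y5")
          case True
          have "?L U = ?L (t3 U)" by (simp only: eqU if_P[OF True] if_not_P[OF F1] if_not_P[OF F2])
          also have "\<dots> = ?L (t5a (t3 U)) - ?L (t5b (t3 U))"
            by (rule rules_5[OF IH]) (use c True in \<open>auto simp add: wt_def mv_def\<close>)
          also have "t5a (t3 U) = t3 (t5a U)" using c True by (simp add: var_fun_eq mv_def)
          also have "t5b (t3 U) = t3 (t5b U)" using c True by (simp add: var_fun_eq mv_def)
          also have "?L (t3 (t5a U)) = ?L (t5a U)"
            by (rule rules_3[OF IH, symmetric]) (use c True in \<open>auto simp add: wt_def mv_def\<close>)
          also have "?L (t3 (t5b U)) = ?L (t5b U)"
            by (rule rules_3[OF IH, symmetric]) (use c True in \<open>auto simp add: wt_def mv_def\<close>)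
          finally show ?thesis .
        next
          case F3: False
          show ?thesis
          proof (cases "0 < U Y4 \<and> 0 < U X4")
            case True
            have "?L U = ?L (t4a U) - ?L (t4b U)" by (simp only: eqU if_P[OF True] if_not_P[OF F1] if_not_P[OF F2] if_not_P[OF F3])
            also have "?L (t4a U) = ?L (t5a (t4a U)) - ?L (t5b (t4a U))"
              by (rule rules_5[OF IH]) (use c True in \<open>auto simp add: wt_def mv_def\<close>)
            also have "?L (t4b U) = ?L (t5a (t4b U)) - ?L (t5b (t4b U))"
              by (rule rules_5[OF IH]) (use c True in \<open>auto simp add: wt_def mv_def\<close>)
            also have "t5a (t4a U) = t4a (t5a U)" using c True by (simp add: var_fun_eq mv_def)
            also have "t5b (t4a U) = t4a (t5b U)" using c True by (simp add: var_fun_eq mv_def)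
            also have "t5a (t4b U) = t4b (t5a U)" using c True by (simp add: var_fun_eq mv_def)
            also have "t5b (t4b U) = t4b (t5b U)" using c True by (simp add: var_fun_eq mv_def)
            also have "?L (t4a (t5a U)) - ?L (t4a (t5b U)) - (?L (t4b (t5a U)) - ?L (t4b (t5b U)))
                = (?L (t4a (t5a U)) - ?L (t4b (t5a U))) - (?L (t4a (t5b U)) - ?L (t4b (t5b U)))"
              by simp
            also have "?L (t4a (t5a U)) - ?L (t4b (t5a U)) = ?L (t5a U)"
              by (rule rules_4[OF IH, symmetric]) (use c True in \<open>auto simp add: wt_def mv_def\<close>)
            also have "?L (t4a (t5b U)) - ?L (t4b (t5b U)) = ?L (t5b U)"
              by (rule rules_4[OF IH, symmetric]) (use c True in \<open>auto simp add: wt_def mv_def\<close>)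
            finally show ?thesis .
          next
            case False
            show ?thesis by (simp only: eqU if_not_P[OF False] if_P[OF c] if_not_P[OF F1] if_not_P[OF F2] if_not_P[OF F3])
          qed
        qed
      qed
    qed
  qed
qed

lemma Lf_link:
  assumes R: "\<And>U. rules LP U"
  shows "Lf LP (inc Y1 u) = LP u"
proof (induction "wt u" arbitrary: u rule: less_induct)
  case less
  have IH: "\<And>v. wt v < wt u \<Longrightarrow> Lf LP (inc Y1 v) = LP v" using less by blast
  note eqU = Lf.simps[of LP "inc Y1 u"]
  have s: "inc Y1 u Y2 = u Y2" "inc Y1 u Y5 = u Y5" "inc Y1 u Y6 = u Y6" "inc Y1 u X4 = u X4"
     "inc Y1 u Y4 = u Y4" "inc Y1 u X1 = u X1" "inc Y1 u Y1 = Suc (u Y1)"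
    by (simp_all add: inc_def)
  show ?case
  proof (cases "0 < u Y2 \<and> 0 < u Y5")
    case C1: True
    have "Lf LP (inc Y1 u) = Lf LP (t1 (inc Y1 u))" by (simp only: eqU s if_P[OF C1])
    also have "t1 (inc Y1 u) = inc Y1 (t1 u)" using C1 by (simp add: var_fun_eq mv_def inc_def)
    also have "Lf LP (inc Y1 (t1 u)) = LP (t1 u)" by (rule IH) (use C1 in \<open>auto simp: wt_def mv_def\<close>)
    also have "\<dots> = LP u" using rules_1[OF R] C1 by simp
    finally show ?thesis .
  next
    case F1: False
    show ?thesis
    proof (cases "0 < u Y6 \<and> 0 < u X4")
      case C2: True
      have "Lf LP (inc Y1 u) = Lf LP (t2 (inc Y1 u))" by (simp only: eqU s if_not_P[OF F1] if_P[OF C2])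
      also have "t2 (inc Y1 u) = inc Y1 (t2 u)" using C2 by (simp add: var_fun_eq mv_def inc_def)
      also have "Lf LP (inc Y1 (t2 u)) = LP (t2 u)" by (rule IH) (use C2 in \<open>auto simp: wt_def mv_def\<close>)
      also have "\<dots> = LP u" using rules_2[OF R] C2 by simp
      finally show ?thesis .
    next
      case F2: False
      show ?thesis
      proof (cases "0 < u X4 \<and> 0 < u Y5")
        case C3: True
        have "Lf LP (inc Y1 u) = Lf LP (t3 (inc Y1 u))"
          by (simp only: eqU s if_not_P[OF F1] if_not_P[OF F2] if_P[OF C3])
        also have "t3 (inc Y1 u) = inc Y1 (t3 u)" using C3 by (simp add: var_fun_eq mv_def inc_def)
        also have "Lf LP (inc Y1 (t3 u)) = LP (t3 u)" by (rule IH) (use C3 in \<open>auto simp: wt_def mv_def\<close>)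
        also have "\<dots> = LP u" using rules_3[OF R] C3 by simp
        finally show ?thesis .
      next
        case F3: False
        show ?thesis
        proof (cases "0 < u Y4 \<and> 0 < u X4")
          case C4: True
          have "Lf LP (inc Y1 u) = Lf LP (t4a (inc Y1 u)) - Lf LP (t4b (inc Y1 u))"
            by (simp only: eqU s if_not_P[OF F1] if_not_P[OF F2] if_not_P[OF F3] if_P[OF C4])
          also have "t4a (inc Y1 u) = inc Y1 (t4a u)" using C4 by (simp add: var_fun_eq mv_def inc_def)
          also have "t4b (inc Y1 u) = inc Y1 (t4b u)" using C4 by (simp add: var_fun_eq mv_def inc_def)
          also have "Lf LP (inc Y1 (t4a u)) = LP (t4a u)" by (rule IH) (use C4 in \<open>auto simp: wt_def mv_def\<close>)
          also have "Lf LP (inc Y1 (t4b u)) = LP (t4b u)" by (rule IH) (use C4 in \<open>auto simp: wt_def mv_def\<close>)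
          also have "LP (t4a u) - LP (t4b u) = LP u" using rules_4[OF R] C4 by simp
          finally show ?thesis .
        next
          case F4: False
          show ?thesis
          proof (cases "0 < u Y6 \<and> 0 < u X1")
            case C5: True
            have "Lf LP (inc Y1 u) = Lf LP (t5a (inc Y1 u)) - Lf LP (t5b (inc Y1 u))"
              by (simp only: eqU s if_not_P[OF F1] if_not_P[OF F2] if_not_P[OF F3] if_not_P[OF F4] if_P[OF C5])
            also have "t5a (inc Y1 u) = inc Y1 (t5a u)" using C5 by (simp add: var_fun_eq mv_def inc_def)
            also have "t5b (inc Y1 u) = inc Y1 (t5b u)" using C5 by (simp add: var_fun_eq mv_def inc_def)
            also have "Lf LP (inc Y1 (t5a u)) = LP (t5a u)" by (rule IH) (use C5 in \<open>auto simp: wt_def mv_def\<close>)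
            also have "Lf LP (inc Y1 (t5b u)) = LP (t5b u)" by (rule IH) (use C5 in \<open>auto simp: wt_def mv_def\<close>)
            also have "LP (t5a u) - LP (t5b u) = LP u" using rules_5[OF R] C5 by simp
            finally show ?thesis .
          next
            case F5: False
            have "Lf LP (inc Y1 u) = LP ((inc Y1 u)(Y1 := inc Y1 u Y1 - 1))"
              by (simp only: eqU s if_not_P[OF F1] if_not_P[OF F2] if_not_P[OF F3] if_not_P[OF F4]
                   if_not_P[OF F5] zero_less_Suc if_True)
            also have "(inc Y1 u)(Y1 := inc Y1 u Y1 - 1) = u" by (simp add: inc_def)
            finally show ?thesis .
          qed
        qed
      qed
    qed
  qed
qed

definition deg :: "(var \<Rightarrow> nat) \<Rightarrow> nat" where
  "deg U = U X1 + U X2 + U X3 + U X4 + U Y1 + U Y2 + U Y3 + U Y4 + U Y5 + U Y6"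

lemma Lf_deg: "Lf LP U \<noteq> 0 \<Longrightarrow> \<exists>m. LP m \<noteq> 0 \<and> deg U = Suc (deg m)"
proof (induction "wt U" arbitrary: U rule: less_induct)
  case less
  have IH: "\<And>V. wt V < wt U \<Longrightarrow> Lf LP V \<noteq> 0 \<Longrightarrow> \<exists>m. LP m \<noteq> 0 \<and> deg V = Suc (deg m)"
    using less by blast
  note eqU = Lf.simps[of LP U]
  show ?case
  proof (cases "0 < U Y2 \<and> 0 < U Y5")
    case C1: True
    have "Lf LP (t1 U) \<noteq> 0" using less(2) by (simp only: eqU if_P[OF C1] not_False_eq_True)
    from IH[OF _ this] C1 show ?thesis by (auto simp: wt_def mv_def deg_def)
  next
    case F1: False
    show ?thesis
    proof (cases "0 < U Y6 \<and> 0 < U X4")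
      case C2: True
      have "Lf LP (t2 U) \<noteq> 0" using less(2) by (simp only: eqU if_not_P[OF F1] if_P[OF C2] not_False_eq_True)
      from IH[OF _ this] C2 show ?thesis by (auto simp: wt_def mv_def deg_def)
    next
      case F2: False
      show ?thesis
      proof (cases "0 < U X4 \<and> 0 < U Y5")
        case C3: True
        have "Lf LP (t3 U) \<noteq> 0" using less(2) by (simp only: eqU if_not_P[OF F1] if_not_P[OF F2] if_P[OF C3] not_False_eq_True)
        from IH[OF _ this] C3 show ?thesis by (auto simp: wt_def mv_def deg_def)
      next
        case F3: False
        show ?thesis
        proof (cases "0 < U Y4 \<and> 0 < U X4")
          case C4: True
          have "Lf LP (t4a U) - Lf LP (t4b U) \<noteq> 0"
            using less(2) by (simp only: eqU if_not_P[OF F1] if_not_P[OF F2] if_not_P[OF F3] if_P[OF C4] not_False_eq_True)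
          hence "Lf LP (t4a U) \<noteq> 0 \<or> Lf LP (t4b U) \<noteq> 0" by auto
          then show ?thesis
          proof
            assume "Lf LP (t4a U) \<noteq> 0"
            from IH[OF _ this] C4 show ?thesis by (auto simp: wt_def mv_def deg_def)
          next
            assume "Lf LP (t4b U) \<noteq> 0"
            from IH[OF _ this] C4 show ?thesis by (auto simp: wt_def mv_def deg_def)
          qed
        next
          case F4: False
          show ?thesis
          proof (cases "0 < U Y6 \<and> 0 < U X1")
            case C5: True
            have "Lf LP (t5a U) - Lf LP (t5b U) \<noteq> 0"
              using less(2) by (simp only: eqU if_not_P[OF F1] if_not_P[OF F2] if_not_P[OF F3]
                 if_not_P[OF F4] if_P[OF C5] not_False_eq_True)
            hence "Lf LP (t5a U) \<noteq> 0 \<or> Lf LP (t5b U) \<noteq> 0" by auto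
            then show ?thesis
            proof
              assume "Lf LP (t5a U) \<noteq> 0"
              from IH[OF _ this] C5 show ?thesis by (auto simp: wt_def mv_def deg_def)
            next
              assume "Lf LP (t5b U) \<noteq> 0"
              from IH[OF _ this] C5 show ?thesis by (auto simp: wt_def mv_def deg_def)
            qed
          next
            case F5: False
            have h: "(if 0 < U Y1 then LP (U(Y1 := U Y1 - 1)) else 0) \<noteq> 0"
              using less(2) by (simp only: eqU if_not_P[OF F1] if_not_P[OF F2] if_not_P[OF F3]
                 if_not_P[OF F4] if_not_P[OF F5] not_False_eq_True)
            hence "0 < U Y1" by (auto split: if_splits)
            with h have "LP (U(Y1 := U Y1 - 1)) \<noteq> 0" by simp
            moreover have "deg U = Suc (deg (U(Y1 := U Y1 - 1)))" using \<open>0 < U Y1\<close> by (simp add: deg_def)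
            ultimately show ?thesis by blast
          qed
        qed
      qed
    qed
  qed
qed

lemma inc_inc_eq: "inc a (inc b u) = (\<lambda>v. u v + (if v = a then 1 else 0) + (if v = b then 1 else 0))"
  by (auto simp: inc_def fun_eq_iff)

lemma P_rules:
  assumes i3: "indep Y3 P"
    and h0: "DD P = 0" and h1: "DD1 P = 0" and h2: "DD2 P = 0" and h3: "DD3 P = 0" and h4: "DD4 P = 0"
  shows "rules (LL P) U"
  unfolding rules_def
proof (intro conjI impI)
  assume c: "0 < U Y2 \<and> 0 < U Y5"
  define u where "u = U(Y2 := U Y2 - 1, Y5 := U Y5 - 1)"
  have "LL (DD P) u = 0" by (simp add: h0 LL_zero)
  hence "LL P (inc Y3 (inc Y4 u)) - LL P (inc Y2 (inc Y5 u)) + LL P (inc Y1 (inc Y6 u)) = 0"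
    by (simp add: DD_def LL_add LL_diff LL_pd)
  moreover have "LL P (inc Y3 (inc Y4 u)) = 0" by (rule LL_indep[OF i3]) (simp add: inc_def)
  moreover have "inc Y2 (inc Y5 u) = U" using c by (simp add: u_def inc_def var_fun_eq)
  moreover have "inc Y1 (inc Y6 u) = t1 U" using c by (simp add: u_def inc_def var_fun_eq mv_def)
  ultimately show "LL P U = LL P (t1 U)" by simp
next
  assume c: "0 < U Y6 \<and> 0 < U X4"
  define u where "u = U(Y6 := U Y6 - 1, X4 := U X4 - 1)"
  have "LL (DD1 P) u = 0" by (simp add: h1 LL_zero)
  hence "LL P (inc X4 (inc Y6 u)) - LL P (inc X3 (inc Y2 u)) + LL P (inc X2 (inc Y3 u)) = 0"
    by (simp add: DD1_def LL_add LL_diff LL_pd)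
  moreover have "LL P (inc X2 (inc Y3 u)) = 0" by (rule LL_indep[OF i3]) (simp add: inc_def)
  moreover have "inc X4 (inc Y6 u) = U" using c by (simp add: u_def inc_def var_fun_eq)
  moreover have "inc X3 (inc Y2 u) = t2 U" using c by (simp add: u_def inc_def var_fun_eq mv_def)
  ultimately show "LL P U = LL P (t2 U)" by simp
next
  assume c: "0 < U X4 \<and> 0 < U Y5"
  define u where "u = U(X4 := U X4 - 1, Y5 := U Y5 - 1)"
  have "LL (DD2 P) u = 0" by (simp add: h2 LL_zero)
  hence "LL P (inc X4 (inc Y5 u)) - LL P (inc X3 (inc Y1 u)) + LL P (inc X1 (inc Y3 u)) = 0"
    by (simp add: DD2_def LL_add LL_diff LL_pd)
  moreover have "LL P (inc X1 (inc Y3 u)) = 0" by (rule LL_indep[OF i3]) (simp add: inc_def)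
  moreover have "inc X4 (inc Y5 u) = U" using c by (simp add: u_def inc_def var_fun_eq)
  moreover have "inc X3 (inc Y1 u) = t3 U" using c by (simp add: u_def inc_def var_fun_eq mv_def)
  ultimately show "LL P U = LL P (t3 U)" by simp
next
  assume c: "0 < U Y4 \<and> 0 < U X4"
  define u where "u = U(Y4 := U Y4 - 1, X4 := U X4 - 1)"
  have "LL (DD3 P) u = 0" by (simp add: h3 LL_zero)
  hence "LL P (inc X4 (inc Y4 u)) - LL P (inc X2 (inc Y1 u)) + LL P (inc X1 (inc Y2 u)) = 0"
    by (simp add: DD3_def LL_add LL_diff LL_pd)
  moreover have "inc X4 (inc Y4 u) = U" using c by (simp add: u_def inc_def var_fun_eq)
  moreover have "inc X2 (inc Y1 u) = t4a U" using c by (simp add: u_def inc_def var_fun_eq mv_def)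
  moreover have "inc X1 (inc Y2 u) = t4b U" using c by (simp add: u_def inc_def var_fun_eq mv_def)
  ultimately show "LL P U = LL P (t4a U) - LL P (t4b U)" by (simp add: algebra_simps)
next
  assume c: "0 < U Y6 \<and> 0 < U X1"
  define u where "u = U(Y6 := U Y6 - 1, X1 := U X1 - 1)"
  have "LL (DD4 P) u = 0" by (simp add: h4 LL_zero)
  hence "LL P (inc X3 (inc Y4 u)) - LL P (inc X2 (inc Y5 u)) + LL P (inc X1 (inc Y6 u)) = 0"
    by (simp add: DD4_def LL_add LL_diff LL_pd)
  moreover have "inc X1 (inc Y6 u) = U" using c by (simp add: u_def inc_def var_fun_eq)
  moreover have "inc X2 (inc Y5 u) = t5a U" using c by (simp add: u_def inc_def var_fun_eq mv_def)
  moreover have "inc X3 (inc Y4 u) = t5b U" using c by (simp add: u_def inc_def var_fun_eq mv_def)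
  ultimately show "LL P U = LL P (t5a U) - LL P (t5b U)" by (simp add: algebra_simps)
qed

lemma inc_apply: "inc a u v = (if v = a then Suc (u a) else u v)"
  by (simp add: inc_def)

lemma le_deg: "U v \<le> deg U"
  by (cases v) (simp_all add: deg_def)

theorem mainTheorem9:
  fixes P :: mpoly
  assumes "indep Y3 P"
    and "DD P = 0" and "DD1 P = 0" and "DD2 P = 0" and "DD3 P = 0" and "DD4 P = 0"
  shows "\<exists>K :: mpoly. indep Y1 K \<and> indep Y3 K
           \<and> DD K = - pd Y6 (y1coeff 0 P)
           \<and> DD1 K = 0
           \<and> DD2 K = pd X3 (y1coeff 0 P)
           \<and> DD3 K = pd X2 (y1coeff 0 P)
           \<and> DD4 K = 0"
proof -
  define LP where "LP = LL P"
  have R: "\<And>U. rules LP U" using P_rules[OF assms] by (simp add: LP_def)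
  have link: "\<And>u. Lf LP (inc Y1 u) = LP u" by (rule Lf_link[OF R])
  have RF: "\<And>U. rules (Lf LP) U" by (rule Lf_rules)
  have LPy3: "\<And>u. u Y3 \<noteq> 0 \<Longrightarrow> LP u = 0" using LL_indep[OF assms(1)] by (simp add: LP_def)
  define Lk where "Lk = (\<lambda>u. if u Y1 = 0 \<and> u Y3 = 0 then Lf LP u / mfact u else 0)"
  have fin: "finite {u. Lk u \<noteq> 0}"
  proof -
    have "{u. Lk u \<noteq> 0} \<subseteq> (\<Union>m\<in>Poly_Mapping.keys P. {U. \<forall>v. U v \<le> Suc (deg m)})"
    proof
      fix U assume "U \<in> {u. Lk u \<noteq> 0}"
      hence "Lf LP U \<noteq> 0" by (auto simp: Lk_def split: if_splits)
      from Lf_deg[OF this] obtain m where m: "LP m \<noteq> 0" "deg U = Suc (deg m)" by blast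
      from m(1) have "m \<in> Poly_Mapping.keys P" by (auto simp: LP_def LL_def in_keys_iff)
      moreover have "\<forall>v. U v \<le> Suc (deg m)" using m(2) le_deg[of U] by metis
      ultimately show "U \<in> (\<Union>m\<in>Poly_Mapping.keys P. {U. \<forall>v. U v \<le> Suc (deg m)})" by blast
    qed
    moreover have "finite (\<Union>m\<in>Poly_Mapping.keys P. {U :: var \<Rightarrow> nat. \<forall>v. U v \<le> Suc (deg m)})"
      by (simp add: finite_bounded_mons)
    ultimately show ?thesis by (rule finite_subset)
  qed
  define K where "K = Abs_poly_mapping Lk"
  have lk: "Poly_Mapping.lookup K = Lk" using fin by (simp add: K_def)
  have LLK: "\<And>u. LL K u = (if u Y1 = 0 \<and> u Y3 = 0 then Lf LP u else 0)"
    by (simp add: LL_def lk Lk_def mfact_nz)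
  have LP0: "\<And>u. LL (y1coeff 0 P) u = (if u Y1 = 0 then LP u else 0)"
    by (simp add: LL_y1coeff0 LP_def)
  show ?thesis
  proof (intro exI conjI)
    show "indep Y1 K" unfolding indep_def by (auto simp: in_keys_iff lk Lk_def split: if_splits)
    show "indep Y3 K" unfolding indep_def by (auto simp: in_keys_iff lk Lk_def split: if_splits)
  next
    show "DD K = - pd Y6 (y1coeff 0 P)"
    proof (rule LL_eqI)
      fix u
      have e: "Lf LP (inc Y2 (inc Y5 u)) = LP (inc Y6 u)"
      proof -
        have "Lf LP (inc Y2 (inc Y5 u)) = Lf LP (t1 (inc Y2 (inc Y5 u)))"
          by (rule rules_1[OF RF]) (simp_all add: inc_apply)
        also have "t1 (inc Y2 (inc Y5 u)) = inc Y1 (inc Y6 u)" by (simp add: var_fun_eq mv_def inc_def)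
        finally show ?thesis using link by simp
      qed
      show "LL (DD K) u = LL (- pd Y6 (y1coeff 0 P)) u"
        using e LPy3[of "inc Y6 u"]
        by (simp add: DD_def LL_add LL_diff LL_pd LL_uminus LLK LP0 inc_apply)
    qed
  next
    show "DD1 K = 0"
    proof (rule LL_eqI)
      fix u
      have e: "Lf LP (inc X4 (inc Y6 u)) = Lf LP (inc X3 (inc Y2 u))"
      proof -
        have "Lf LP (inc X4 (inc Y6 u)) = Lf LP (t2 (inc X4 (inc Y6 u)))"
          by (rule rules_2[OF RF]) (simp_all add: inc_apply)
        also have "t2 (inc X4 (inc Y6 u)) = inc X3 (inc Y2 u)" by (simp add: var_fun_eq mv_def inc_def)
        finally show ?thesis .
      qed
      show "LL (DD1 K) u = LL 0 u"
        using e by (simp add: DD1_def LL_add LL_diff LL_pd LL_zero LLK inc_apply)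
    qed
  next
    show "DD2 K = pd X3 (y1coeff 0 P)"
    proof (rule LL_eqI)
      fix u
      have e: "Lf LP (inc X4 (inc Y5 u)) = LP (inc X3 u)"
      proof -
        have "Lf LP (inc X4 (inc Y5 u)) = Lf LP (t3 (inc X4 (inc Y5 u)))"
          by (rule rules_3[OF RF]) (simp_all add: inc_apply)
        also have "t3 (inc X4 (inc Y5 u)) = inc Y1 (inc X3 u)" by (simp add: var_fun_eq mv_def inc_def)
        finally show ?thesis using link by simp
      qed
      show "LL (DD2 K) u = LL (pd X3 (y1coeff 0 P)) u"
        using e LPy3[of "inc X3 u"]
        by (simp add: DD2_def LL_add LL_diff LL_pd LLK LP0 inc_apply)
    qed
  next
    show "DD3 K = pd X2 (y1coeff 0 P)"
    proof (rule LL_eqI)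
      fix u
      have e: "Lf LP (inc X4 (inc Y4 u)) + Lf LP (inc X1 (inc Y2 u)) = LP (inc X2 u)"
      proof -
        have "Lf LP (inc X4 (inc Y4 u)) = Lf LP (t4a (inc X4 (inc Y4 u))) - Lf LP (t4b (inc X4 (inc Y4 u)))"
          by (rule rules_4[OF RF]) (simp_all add: inc_apply)
        also have "t4a (inc X4 (inc Y4 u)) = inc Y1 (inc X2 u)" by (simp add: var_fun_eq mv_def inc_def)
        also have "t4b (inc X4 (inc Y4 u)) = inc X1 (inc Y2 u)" by (simp add: var_fun_eq mv_def inc_def)
        finally show ?thesis using link by simp
      qed
      show "LL (DD3 K) u = LL (pd X2 (y1coeff 0 P)) u"
        using e LPy3[of "inc X2 u"]
        by (simp add: DD3_def LL_add LL_diff LL_pd LLK LP0 inc_apply)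
    qed
  next
    show "DD4 K = 0"
    proof (rule LL_eqI)
      fix u
      have e: "Lf LP (inc X1 (inc Y6 u)) = Lf LP (inc X2 (inc Y5 u)) - Lf LP (inc X3 (inc Y4 u))"
      proof -
        have "Lf LP (inc X1 (inc Y6 u)) = Lf LP (t5a (inc X1 (inc Y6 u))) - Lf LP (t5b (inc X1 (inc Y6 u)))"
          by (rule rules_5[OF RF]) (simp_all add: inc_apply)
        also have "t5a (inc X1 (inc Y6 u)) = inc X2 (inc Y5 u)" by (simp add: var_fun_eq mv_def inc_def)
        also have "t5b (inc X1 (inc Y6 u)) = inc X3 (inc Y4 u)" by (simp add: var_fun_eq mv_def inc_def)
        finally show ?thesis .
      qed
      show "LL (DD4 K) u = LL 0 u"
        using e by (simp add: DD4_def LL_add LL_diff LL_pd LL_zero LLK inc_apply)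
    qed
  qed
qed

end
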